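(* Let $S$ be a Stone relation algebra, and let $C : S\to\mathbb{N}\cup\{\infty\}$ map each $x$ to the number of atoms $a\in S$ with $a\sqsubseteq x$. Then $C$ satisfies: (C1a) $C(\bot)=0$; (C2a) $C(x)=1$ for every atom $x$; (C3) $C(x^{\smile})=C(x)$ for all $x$; (C4a) $C(x)+C(y)=C(x\sqcup y)+C(x\sqcap y)$ for all $x,y$; (C4b) $x\sqsubseteq y$ implies $C(x)\le C(y)$. If moreover $S$ is atomic, then $C$ also satisfies: (C1b) $C(x)=0\iff x=\bot$; (C5a) $C(x^{\smile}y\sqcap z)\le C(xz\sqcap y)$ for all $y,z$ and all univalent $x$; (C5b) $C(x\sqcap yz^{\smile})\le C(xz\sqcap y)$ for all $y,z$ and all univalent $x$; (C5c) $C(yx)\le C(y)$ for all $y$ and all univalent $x$; (C5d) $C(x\sqcap y\top)\le C(y)$ for all $y$ and all univalent $x$; (C5e) $C(x\sqcap yy^{\smile})\le C(y)$ for all $y$ and all univalent $x$; (C6a) $C(1\sqcap xx^{\smile})\le C(x)$ for all $x$; (C6b) $C(1\sqcap x^{\smile}x)\le C(x)$ for all $x$.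
   Context: A Stone relation algebra is a structure $(S,\sqcup,\sqcap,\cdot,\overline{\,\cdot\,},{}^{\smile},\bot,\top,1)$ (write $xy$ for $x\cdot y$, $\overline{x}$ for the pseudocomplement, $x^{\smile}$ for the converse) such that: $(S,\sqcup,\sqcap,\bot,\top)$ is a bounded distributive lattice with order $x\sqsubseteq y\iff x\sqcup y=y$; $x\sqcap y=\bot\iff x\sqsubseteq\overline{y}$; $\overline{x}\sqcup\overline{\overline{x}}=\top$; $\cdot$ is associative with two-sided unit $1$, distributes over $\sqcup$ on both sides, and $\bot$ is a zero of $\cdot$; $x^{\smile\smile}=x$, $(xy)^{\smile}=y^{\smile}x^{\smile}$, $(x\sqcup y)^{\smile}=x^{\smile}\sqcup y^{\smile}$; $\overline{\overline{1}}=1$; $\overline{\overline{xy}}=\overline{\overline{x}}\,\overline{\overline{y}}$; $xy\sqcap z\sqsubseteq x(y\sqcap x^{\smile}z)$. An atom is an element $x\neq\bot$ such that $\bot\neq y\sqsubseteq x$ implies $y=x$. $S$ is atomic if every $x\neq\bot$ has an atom below it. $x$ is univalent if $x^{\smile}x\sqsubseteq 1$. Arithmetic in $\mathbb{N}\cup\{\infty\}$ is the usual one with $n+\infty=\infty+n=\infty$ and $n\le\infty$. *)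

theory Defs
  imports Main "HOL-Library.Extended_Nat"
begin

text \<open>The lattice part is a bounded distributive lattice
  (inf, sup, bot, top, less_eq); composition is times, its unit is one,
  pcomp is the pseudocomplement and conv the converse.\<close>

class stone_relation_algebra = bounded_lattice + distrib_lattice + times + one +
  fixes pcomp :: "'a \<Rightarrow> 'a"
    and conv :: "'a \<Rightarrow> 'a"
  assumes pcomp_galois: "inf x y = bot \<longleftrightarrow> x \<le> pcomp y"
    and stone: "sup (pcomp x) (pcomp (pcomp x)) = top"
    and comp_assoc: "(x * y) * z = x * (y * z)"
    and comp_left_one: "1 * x = x"
    and comp_right_one: "x * 1 = x"
    and comp_left_dist_sup: "x * sup y z = sup (x * y) (x * z)"
    and comp_right_dist_sup: "sup x y * z = sup (x * z) (y * z)"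
    and comp_left_zero: "bot * x = bot"
    and comp_right_zero: "x * bot = bot"
    and conv_involutive: "conv (conv x) = x"
    and conv_dist_comp: "conv (x * y) = conv y * conv x"
    and conv_dist_sup: "conv (sup x y) = sup (conv x) (conv y)"
    and pp_one: "pcomp (pcomp 1) = 1"
    and pp_dist_comp: "pcomp (pcomp (x * y)) = pcomp (pcomp x) * pcomp (pcomp y)"
    and dedekind_1: "inf (x * y) z \<le> x * inf y (conv x * z)"

definition atom :: "'a::stone_relation_algebra \<Rightarrow> bool" where
  "atom x \<longleftrightarrow> x \<noteq> bot \<and> (\<forall>y. y \<noteq> bot \<and> y \<le> x \<longrightarrow> y = x)"

definition univalent :: "'a::stone_relation_algebra \<Rightarrow> bool" where
  "univalent x \<longleftrightarrow> conv x * x \<le> 1"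

definition atom_count :: "'a::stone_relation_algebra \<Rightarrow> enat" where
  "atom_count x = (if finite {a. atom a \<and> a \<le> x} then enat (card {a. atom a \<and> a \<le> x}) else \<infinity>)"

end

theory Submission
  imports Defs
begin


lemma comp_mono_l: "(y::'a::stone_relation_algebra) \<le> z \<Longrightarrow> x * y \<le> x * z"
  by (metis comp_left_dist_sup le_iff_sup)

lemma comp_mono_r: "(y::'a::stone_relation_algebra) \<le> z \<Longrightarrow> y * x \<le> z * x"
  by (metis comp_right_dist_sup le_iff_sup)

lemma conv_mono: "(x::'a::stone_relation_algebra) \<le> y \<Longrightarrow> conv x \<le> conv y"
  by (metis conv_dist_sup le_iff_sup)

lemma conv_le_iff: "conv (x::'a::stone_relation_algebra) \<le> conv y \<longleftrightarrow> x \<le> y"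
  by (metis conv_mono conv_involutive)

lemma conv_bot: "conv (bot::'a::stone_relation_algebra) = bot"
  by (metis bot_least conv_involutive conv_mono bot_unique)

lemma conv_top: "conv (top::'a::stone_relation_algebra) = top"
  by (metis top_greatest conv_involutive conv_mono top_unique)

lemma conv_inf: "conv (inf (x::'a::stone_relation_algebra) y) = inf (conv x) (conv y)"
proof (rule antisym)
  show "conv (inf x y) \<le> inf (conv x) (conv y)" by (simp add: conv_mono)
  have "conv (inf (conv x) (conv y)) \<le> inf x y"
    by (metis conv_involutive conv_mono inf_le1 inf_le2 le_inf_iff)
  then show "inf (conv x) (conv y) \<le> conv (inf x y)"
    by (metis conv_involutive conv_mono)
qed

lemma conv_one: "conv (1::'a::stone_relation_algebra) = 1"
  by (metis comp_right_one comp_left_one conv_dist_comp conv_involutive)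

lemma dedekind_2: "inf ((x::'a::stone_relation_algebra) * y) z \<le> inf x (z * conv y) * y"
proof -
  have "conv (inf (x * y) z) \<le> conv y * inf (conv x) (y * conv z)"
    using dedekind_1[of "conv y" "conv x" "conv z"]
    by (simp add: conv_inf conv_dist_comp conv_involutive)
  also have "\<dots> = conv (inf x (z * conv y) * y)"
    by (simp add: conv_inf conv_dist_comp conv_involutive)
  finally show ?thesis by (simp add: conv_le_iff)
qed

lemma univ1:
  assumes "univalent x" shows "inf (x * y) (x * z) \<le> x * inf y z"
proof -
  have "inf (x * y) (x * z) \<le> x * inf y (conv x * (x * z))" by (rule dedekind_1)
  also have "conv x * (x * z) \<le> z"
    using assms unfolding univalent_def
    by (metis comp_assoc comp_left_one comp_mono_r)
  hence "x * inf y (conv x * (x * z)) \<le> x * inf y z"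
    by (simp add: comp_mono_l le_infI2)
  finally show ?thesis .
qed

lemma univ2:
  assumes "univalent x" "u \<le> x" "v \<le> x"
  shows "inf (u * z) (v * z) \<le> inf u v * z"
proof -
  have 1: "inf (u * z) (v * z) \<le> inf u (v * z * conv z) * z" by (rule dedekind_2)
  have "v * z * conv z \<le> v * top" by (simp add: comp_assoc comp_mono_l)
  hence "inf u (v * z * conv z) \<le> inf x (v * top)" using assms(2) by (simp add: le_infI1 le_infI2)
  also have "inf x (v * top) \<le> inf (v * top) x" by simp
  also have "\<dots> \<le> v * inf top (conv v * x)" by (rule dedekind_1)
  also have "\<dots> \<le> v * (conv x * x)"
    by (simp add: assms(3) comp_mono_l comp_mono_r conv_mono)
  also have "\<dots> \<le> v * 1" using assms(1) unfolding univalent_def by (rule comp_mono_l)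
  finally have "inf u (v * z * conv z) \<le> inf u v"
    by (simp add: comp_right_one)
  hence "inf u (v * z * conv z) * z \<le> inf u v * z" by (rule comp_mono_r)
  with 1 show ?thesis by simp
qed

lemma atom_le_sup:
  assumes "atom a" "a \<le> sup x y" shows "a \<le> x \<or> a \<le> y"
proof -
  have "a = sup (inf a x) (inf a y)" using assms(2)
    by (metis inf.absorb1 inf_sup_distrib1)
  then show ?thesis using assms(1) unfolding atom_def
    by (metis inf.cobounded1 inf.cobounded2 sup_bot.left_neutral)
qed

lemma atom_conv: "atom a \<Longrightarrow> atom (conv a)"
  unfolding atom_def
  by (metis conv_bot conv_involutive conv_le_iff)

lemma atom_below_comp_bot:
  assumes "atom a" "a \<le> w * h" shows "w \<noteq> bot"
  using assms unfolding atom_def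
  by (metis bot_unique comp_left_zero)

lemma count_le:
  fixes u v :: "'a::stone_relation_algebra"
  assumes atomic: "\<forall>x::'a. x \<noteq> bot \<longrightarrow> (\<exists>a. atom a \<and> a \<le> x)"
    and ne: "\<And>a. atom a \<Longrightarrow> a \<le> u \<Longrightarrow> inf v (g a) \<noteq> bot"
    and dj: "\<And>a a'. atom a \<Longrightarrow> atom a' \<Longrightarrow> a \<le> u \<Longrightarrow> a' \<le> u \<Longrightarrow> a \<noteq> a' \<Longrightarrow> inf (g a) (g a') = bot"
  shows "atom_count u \<le> atom_count v"
proof -
  define A where "A = {a. atom a \<and> a \<le> u}"
  define B where "B = {a. atom a \<and> a \<le> v}"
  define f where "f a = (SOME b. atom b \<and> b \<le> inf v (g a))" for a
  have fa: "atom (f a) \<and> f a \<le> inf v (g a)" if "a \<in> A" for a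
    unfolding f_def using ne[of a] that atomic unfolding A_def
    by (metis (mono_tags, lifting) mem_Collect_eq someI_ex)
  have sub: "f ` A \<subseteq> B" using fa unfolding B_def by auto
  have inj: "inj_on f A"
  proof (rule inj_onI, rule ccontr)
    fix a a' assume a: "a \<in> A" "a' \<in> A" "f a = f a'" "a \<noteq> a'"
    have "f a \<le> inf (g a) (g a')" using fa[OF a(1)] fa[OF a(2)] a(3) by auto
    also have "\<dots> = bot" using dj a unfolding A_def by auto
    finally show False using fa[OF a(1)] unfolding atom_def by (simp add: bot_unique)
  qed
  show ?thesis
  proof (cases "finite B")
    case False then show ?thesis unfolding atom_count_def B_def by simp
  next
    case True
    then have fA: "finite A" using sub inj by (meson finite_imageD finite_subset)
    have "card A \<le> card B" using card_inj_on_le[OF inj sub True] .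
    then show ?thesis using True fA unfolding atom_count_def A_def B_def by simp
  qed
qed


lemma atoms_disj:
  fixes a :: "'a::stone_relation_algebra"
  assumes "atom a" "atom a'" "a \<noteq> a'" shows "inf a a' = bot"
  using assms unfolding atom_def by (metis inf.cobounded1 inf.cobounded2)

lemma atom_nonbot_le: "atom a \<Longrightarrow> a \<le> w * h \<Longrightarrow> w \<le> w' \<Longrightarrow> w' \<noteq> bot"
  using atom_below_comp_bot by (metis bot_unique)

lemma C_bot: "atom_count (bot::'a::stone_relation_algebra) = 0"
proof -
  have e: "{a::'a. atom a \<and> a \<le> bot} = {}" unfolding atom_def by (auto simp: bot_unique)
  show ?thesis unfolding atom_count_def e by (simp add: zero_enat_def)
qed

lemma C_atom: "atom (x::'a::stone_relation_algebra) \<Longrightarrow> atom_count x = 1"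
proof -
  assume x: "atom x"
  have "{a::'a. atom a \<and> a \<le> x} = {x}"
  proof (intro equalityI subsetI)
    fix a assume "a \<in> {a::'a. atom a \<and> a \<le> x}"
    then have "atom a" "a \<le> x" by auto
    then show "a \<in> {x}" using x unfolding atom_def by auto
  next
    fix a assume "a \<in> {x}" then show "a \<in> {a::'a. atom a \<and> a \<le> x}" using x by auto
  qed
  then show ?thesis unfolding atom_count_def by (simp add: one_enat_def)
qed

lemma C_conv: "atom_count (conv x) = atom_count (x::'a::stone_relation_algebra)"
proof -
  have inj: "inj_on conv {a::'a. atom a \<and> a \<le> x}"
  proof (rule inj_onI)
    fix a b :: 'a assume "conv a = conv b"
    then have "conv (conv a) = conv (conv b)" by simp
    then show "a = b" by (simp add: conv_involutive)
  qed
  have img: "conv ` {a. atom a \<and> a \<le> x} = {a. atom a \<and> a \<le> conv x}"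
  proof (intro equalityI subsetI)
    fix b assume "b \<in> conv ` {a. atom a \<and> a \<le> x}"
    then obtain a where "atom a" "a \<le> x" "b = conv a" by blast
    then show "b \<in> {a. atom a \<and> a \<le> conv x}" by (simp add: atom_conv conv_mono)
  next
    fix a assume "a \<in> {a. atom a \<and> a \<le> conv x}"
    then have 1: "atom a" "a \<le> conv x" by auto
    have "atom (conv a)" using 1(1) by (rule atom_conv)
    moreover have "conv a \<le> x" using conv_mono[OF 1(2)] by (simp add: conv_involutive)
    ultimately have "conv a \<in> {a. atom a \<and> a \<le> x}" by simp
    moreover have "a = conv (conv a)" by (simp add: conv_involutive)
    ultimately show "a \<in> conv ` {a. atom a \<and> a \<le> x}" by (rule rev_image_eqI)
  qed
  have b: "bij_betw conv {a::'a. atom a \<and> a \<le> x} {a. atom a \<and> a \<le> conv x}"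
    unfolding bij_betw_def using inj img by simp
  have f: "finite {a::'a. atom a \<and> a \<le> x} = finite {a. atom a \<and> a \<le> conv x}"
    by (rule bij_betw_finite[OF b])
  have c: "card {a::'a. atom a \<and> a \<le> x} = card {a. atom a \<and> a \<le> conv x}"
    by (rule bij_betw_same_card[OF b])
  show ?thesis unfolding atom_count_def f c by simp
qed

lemma C_mono: "(x::'a::stone_relation_algebra) \<le> y \<Longrightarrow> atom_count x \<le> atom_count y"
proof -
  assume xy: "x \<le> y"
  have sub: "{a::'a. atom a \<and> a \<le> x} \<subseteq> {a. atom a \<and> a \<le> y}" using xy by auto
  show ?thesis
  proof (cases "finite {a::'a. atom a \<and> a \<le> y}")
    case True
    then show ?thesis using sub unfolding atom_count_def
      by (simp add: card_mono finite_subset)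
  next
    case False then show ?thesis unfolding atom_count_def by simp
  qed
qed

lemma C_sup_inf:
  "atom_count x + atom_count y = atom_count (sup x y) + atom_count (inf x (y::'a::stone_relation_algebra))"
proof -
  define A where "A = {a::'a. atom a \<and> a \<le> x}"
  define B where "B = {a::'a. atom a \<and> a \<le> y}"
  have U: "{a::'a. atom a \<and> a \<le> sup x y} = A \<union> B" unfolding A_def B_def
    using atom_le_sup le_supI1 le_supI2 by blast
  have I: "{a::'a. atom a \<and> a \<le> inf x y} = A \<inter> B" unfolding A_def B_def by auto
  show ?thesis
  proof (cases "finite A \<and> finite B")
    case True
    then show ?thesis unfolding atom_count_def U I A_def[symmetric] B_def[symmetric]
      using card_Un_Int[of A B] by simp
  next
    case False
    then show ?thesis unfolding atom_count_def U I A_def[symmetric] B_def[symmetric]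
      by auto
  qed
qed

lemma C_zero:
  assumes atomic: "\<forall>x::'a::stone_relation_algebra. x \<noteq> bot \<longrightarrow> (\<exists>a. atom a \<and> a \<le> x)"
  shows "atom_count (x::'a) = 0 \<longleftrightarrow> x = bot"
proof
  assume "atom_count x = 0"
  then have "finite {a::'a. atom a \<and> a \<le> x}" "card {a::'a. atom a \<and> a \<le> x} = 0"
    unfolding atom_count_def by (auto split: if_splits simp: zero_enat_def)
  then have "{a::'a. atom a \<and> a \<le> x} = {}" by simp
  then show "x = bot" using atomic by blast
next
  assume "x = bot" then show "atom_count x = 0" using C_bot by simp
qed

lemma C5a:
  fixes x :: "'a::stone_relation_algebra"
  assumes atomic: "\<forall>x::'a. x \<noteq> bot \<longrightarrow> (\<exists>a. atom a \<and> a \<le> x)" and u: "univalent x"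
  shows "atom_count (inf (conv x * y) z) \<le> atom_count (inf (x * z) y)"
proof (rule count_le[OF atomic, where g = "\<lambda>a. x * a"])
  fix a :: 'a assume a: "atom a" "a \<le> inf (conv x * y) z"
  have "a \<le> inf (conv x * y) a" using a by simp
  also have "\<dots> \<le> conv x * inf y (x * a)" using dedekind_1[of "conv x" y a] by (simp add: conv_involutive)
  finally have 1: "a \<le> conv x * inf y (x * a)" .
  have xa: "x * a \<le> x * z" using a by (simp add: comp_mono_l)
  have h: "inf y (x * a) \<le> inf (inf (x * z) y) (x * a)" using xa
    by (meson inf.cobounded1 inf.cobounded2 le_inf_iff order_trans)
  show "inf (inf (x * z) y) (x * a) \<noteq> bot"
  proof (rule notI)
    assume "inf (inf (x * z) y) (x * a) = bot"
    then have "inf y (x * a) = bot" using h by (simp add: bot_unique)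
    then have "a \<le> bot" using 1 by (simp add: comp_right_zero)
    then show False using a(1) unfolding atom_def by (simp add: bot_unique)
  qed
next
  fix a a' :: 'a assume "atom a" "atom a'" "a \<noteq> a'"
  then have "inf a a' = bot" by (rule atoms_disj)
  then show "inf (x * a) (x * a') = bot" using univ1[OF u, of a a']
    by (simp add: comp_right_zero bot_unique)
qed

lemma C5b:
  fixes x :: "'a::stone_relation_algebra"
  assumes atomic: "\<forall>x::'a. x \<noteq> bot \<longrightarrow> (\<exists>a. atom a \<and> a \<le> x)" and u: "univalent x"
  shows "atom_count (inf x (y * conv z)) \<le> atom_count (inf (x * z) y)"
proof (rule count_le[OF atomic, where g = "\<lambda>a. a * z"])
  fix a :: 'a assume a: "atom a" "a \<le> inf x (y * conv z)"
  have "a \<le> inf (y * conv z) a" using a by simp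
  also have "\<dots> \<le> inf y (a * z) * conv z" using dedekind_2[of y "conv z" a] by (simp add: conv_involutive)
  finally have 1: "a \<le> inf y (a * z) * conv z" .
  have xa: "a * z \<le> x * z" using a by (simp add: comp_mono_r)
  have "inf y (a * z) \<le> inf (inf (x * z) y) (a * z)" using xa
    by (meson inf.cobounded1 inf.cobounded2 le_inf_iff order_trans)
  then show "inf (inf (x * z) y) (a * z) \<noteq> bot"
    using atom_nonbot_le 1 a(1) by blast
next
  fix a a' :: 'a assume "atom a" "atom a'" "a \<le> inf x (y * conv z)" "a' \<le> inf x (y * conv z)" "a \<noteq> a'"
  then have "inf a a' = bot" "a \<le> x" "a' \<le> x" using atoms_disj by auto
  then show "inf (a * z) (a' * z) = bot" using univ2[OF u, of a a' z]
    by (simp add: comp_left_zero bot_unique)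
qed

lemma C5c:
  fixes x :: "'a::stone_relation_algebra"
  assumes atomic: "\<forall>x::'a. x \<noteq> bot \<longrightarrow> (\<exists>a. atom a \<and> a \<le> x)" and u: "univalent x"
  shows "atom_count (y * x) \<le> atom_count y"
proof (rule count_le[OF atomic, where g = "\<lambda>a. a * conv x"])
  fix a :: 'a assume a: "atom a" "a \<le> y * x"
  have "a \<le> inf (y * x) a" using a by simp
  also have "\<dots> \<le> inf y (a * conv x) * x" by (rule dedekind_2)
  finally show "inf y (a * conv x) \<noteq> bot"
    using atom_nonbot_le a(1) by blast
next
  fix a a' :: 'a assume "atom a" "atom a'" "a \<noteq> a'"
  then have "inf a a' = bot" by (rule atoms_disj)
  then have "inf (conv a) (conv a') = bot" by (simp add: conv_inf[symmetric] conv_bot)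
  then have "x * inf (conv a) (conv a') = bot" by (simp add: comp_right_zero)
  then have "conv (inf (a * conv x) (a' * conv x)) = bot" using univ1[OF u, of "conv a" "conv a'"]
    by (simp add: conv_inf conv_dist_comp conv_involutive bot_unique)
  then have "conv (conv (inf (a * conv x) (a' * conv x))) = bot" by (simp add: conv_bot)
  then show "inf (a * conv x) (a' * conv x) = bot" by (simp add: conv_involutive)
qed

lemma C5d:
  fixes x :: "'a::stone_relation_algebra"
  assumes atomic: "\<forall>x::'a. x \<noteq> bot \<longrightarrow> (\<exists>a. atom a \<and> a \<le> x)" and u: "univalent x"
  shows "atom_count (inf x (y * top)) \<le> atom_count y"
proof (rule count_le[OF atomic, where g = "\<lambda>a. a * conv top"])
  fix a :: 'a assume a: "atom a" "a \<le> inf x (y * top)"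
  have "a \<le> inf (y * top) a" using a by simp
  also have "\<dots> \<le> inf y (a * conv top) * top" by (rule dedekind_2)
  finally show "inf y (a * conv top) \<noteq> bot"
    using atom_nonbot_le a(1) by blast
next
  fix a a' :: 'a assume "atom a" "atom a'" "a \<le> inf x (y * top)" "a' \<le> inf x (y * top)" "a \<noteq> a'"
  then have "inf a a' = bot" "a \<le> x" "a' \<le> x" using atoms_disj by auto
  then show "inf (a * conv top) (a' * conv top) = bot" using univ2[OF u, of a a' "conv top"]
    by (simp add: comp_left_zero bot_unique)
qed

lemma C5e:
  fixes x :: "'a::stone_relation_algebra"
  assumes atomic: "\<forall>x::'a. x \<noteq> bot \<longrightarrow> (\<exists>a. atom a \<and> a \<le> x)" and u: "univalent x"
  shows "atom_count (inf x (y * conv y)) \<le> atom_count y"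
proof (rule count_le[OF atomic, where g = "\<lambda>a. a * y"])
  fix a :: 'a assume a: "atom a" "a \<le> inf x (y * conv y)"
  have "a \<le> inf (y * conv y) a" using a by simp
  also have "\<dots> \<le> inf y (a * y) * conv y" using dedekind_2[of y "conv y" a] by (simp add: conv_involutive)
  finally show "inf y (a * y) \<noteq> bot"
    using atom_nonbot_le a(1) by blast
next
  fix a a' :: 'a assume "atom a" "atom a'" "a \<le> inf x (y * conv y)" "a' \<le> inf x (y * conv y)" "a \<noteq> a'"
  then have "inf a a' = bot" "a \<le> x" "a' \<le> x" using atoms_disj by auto
  then show "inf (a * y) (a' * y) = bot" using univ2[OF u, of a a' y]
    by (simp add: comp_left_zero bot_unique)
qed

lemma univ_one: "univalent (1::'a::stone_relation_algebra)"
  unfolding univalent_def by (simp add: conv_one comp_left_one)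

theorem mainTheorem2:
  fixes C :: "'a::stone_relation_algebra \<Rightarrow> enat"
  defines "C \<equiv> atom_count"
  shows "C bot = 0
    \<and> (\<forall>x. atom x \<longrightarrow> C x = 1)
    \<and> (\<forall>x. C (conv x) = C x)
    \<and> (\<forall>x y. C x + C y = C (sup x y) + C (inf x y))
    \<and> (\<forall>x y. x \<le> y \<longrightarrow> C x \<le> C y)
    \<and> ((\<forall>x::'a. x \<noteq> bot \<longrightarrow> (\<exists>a. atom a \<and> a \<le> x)) \<longrightarrow>
         (\<forall>x. C x = 0 \<longleftrightarrow> x = bot)
       \<and> (\<forall>x y z. univalent x \<longrightarrow> C (inf (conv x * y) z) \<le> C (inf (x * z) y))
       \<and> (\<forall>x y z. univalent x \<longrightarrow> C (inf x (y * conv z)) \<le> C (inf (x * z) y))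
       \<and> (\<forall>x y. univalent x \<longrightarrow> C (y * x) \<le> C y)
       \<and> (\<forall>x y. univalent x \<longrightarrow> C (inf x (y * top)) \<le> C y)
       \<and> (\<forall>x y. univalent x \<longrightarrow> C (inf x (y * conv y)) \<le> C y)
       \<and> (\<forall>x. C (inf 1 (x * conv x)) \<le> C x)
       \<and> (\<forall>x. C (inf 1 (conv x * x)) \<le> C x))"
  unfolding C_def
proof (intro conjI)
  show "atom_count (bot::'a) = 0" by (rule C_bot)
  show "\<forall>x::'a. atom x \<longrightarrow> atom_count x = 1" using C_atom by blast
  show "\<forall>x::'a. atom_count (conv x) = atom_count x" using C_conv by blast
  show "\<forall>x y::'a. atom_count x + atom_count y = atom_count (sup x y) + atom_count (inf x y)"
    using C_sup_inf by blast
  show "\<forall>x y::'a. x \<le> y \<longrightarrow> atom_count x \<le> atom_count y" using C_mono by blast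
  show "(\<forall>x::'a. x \<noteq> bot \<longrightarrow> (\<exists>a. atom a \<and> a \<le> x)) \<longrightarrow>
         (\<forall>x::'a. atom_count x = 0 \<longleftrightarrow> x = bot)
       \<and> (\<forall>x y z::'a. univalent x \<longrightarrow> atom_count (inf (conv x * y) z) \<le> atom_count (inf (x * z) y))
       \<and> (\<forall>x y z::'a. univalent x \<longrightarrow> atom_count (inf x (y * conv z)) \<le> atom_count (inf (x * z) y))
       \<and> (\<forall>x y::'a. univalent x \<longrightarrow> atom_count (y * x) \<le> atom_count y)
       \<and> (\<forall>x y::'a. univalent x \<longrightarrow> atom_count (inf x (y * top)) \<le> atom_count y)
       \<and> (\<forall>x y::'a. univalent x \<longrightarrow> atom_count (inf x (y * conv y)) \<le> atom_count y)
       \<and> (\<forall>x::'a. atom_count (inf 1 (x * conv x)) \<le> atom_count x)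
       \<and> (\<forall>x::'a. atom_count (inf 1 (conv x * x)) \<le> atom_count x)"
  proof (intro impI conjI)
    assume at: "\<forall>x::'a. x \<noteq> bot \<longrightarrow> (\<exists>a. atom a \<and> a \<le> x)"
    show "\<forall>x::'a. atom_count x = 0 \<longleftrightarrow> x = bot" using C_zero[OF at] by blast
    show "\<forall>x y z::'a. univalent x \<longrightarrow> atom_count (inf (conv x * y) z) \<le> atom_count (inf (x * z) y)"
      using C5a[OF at] by blast
    show "\<forall>x y z::'a. univalent x \<longrightarrow> atom_count (inf x (y * conv z)) \<le> atom_count (inf (x * z) y)"
      using C5b[OF at] by blast
    show "\<forall>x y::'a. univalent x \<longrightarrow> atom_count (y * x) \<le> atom_count y"
      using C5c[OF at] by blast
    show "\<forall>x y::'a. univalent x \<longrightarrow> atom_count (inf x (y * top)) \<le> atom_count y"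
      using C5d[OF at] by blast
    show "\<forall>x y::'a. univalent x \<longrightarrow> atom_count (inf x (y * conv y)) \<le> atom_count y"
      using C5e[OF at] by blast
    show "\<forall>x::'a. atom_count (inf 1 (x * conv x)) \<le> atom_count x"
      using C5e[OF at univ_one] by blast
    show "\<forall>x::'a. atom_count (inf 1 (conv x * x)) \<le> atom_count x"
    proof
      fix x :: 'a
      have "atom_count (inf 1 (conv x * conv (conv x))) \<le> atom_count (conv x)"
        by (rule C5e[OF at univ_one])
      then show "atom_count (inf 1 (conv x * x)) \<le> atom_count x"
        by (simp only: conv_involutive C_conv)
    qed
  qed
qed

end
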